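(* In the two-period, two-sequence crossover design ($\mathcal{S}^{\mathrm{obs}}=\{AB,BA\}$, $N_{AB},N_{BA}\ge1$) under complete randomization, suppose Assumption 1 holds and Assumption 2 holds with $k=1$, so that $\tau_2:=\tau_2(A)=\tau_2(B)$. Then the only unbiased linear estimator of $\tau_1$ is $\widehat Y_1(AB)-\widehat Y_1(BA)$, and the only unbiased linear estimator of $\tau_2$ is $\widehat Y_2(BA)-\widehat Y_2(AB)$.
   Context: Setup: $N$ units, treatments $A,B$, $T$ periods; sequences $\vec z\in\{A,B\}^T$, $\vec z_{[t_1,t_2]}=z_{t_1}\cdots z_{t_2}$. Complete randomization with fixed positive group sizes $N_{\vec z}$, $\vec z\in\mathcal{S}^{\mathrm{obs}}$. Fixed potential outcomes $Y_{it}(\vec z)$ for all $\vec z\in\{A,B\}^T$; observed $Y_{it}=Y_{it}(\vec Z_i)$; randomness only from assignment. $\bar Y_t(\vec z)=N^{-1}\sum_iY_{it}(\vec z)$, $\widehat Y_t(\vec z)=N_{\vec z}^{-1}\sum_iY_{it}\mathbf1(\vec Z_i=\vec z)$. Assumption 1: $Y_{it}(\vec z)=Y_{it}(\vec z')$ whenever $\vec z_{[1,t]}=\vec z'_{[1,t]}$. Assumption 2 (order $k$): $Y_{it}(\vec z)=Y_{it}(\vec z')$ whenever $\vec z_{[\max(1,t-k+1),t]}=\vec z'_{[\max(1,t-k+1),t]}$. Estimands: $\tau_1=\bar Y_1(A)-\bar Y_1(B)$, $\tau_2(z_1)=\bar Y_2(z_1A)-\bar Y_2(z_1B)$. A linear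 estimator is $\sum_{t}\sum_{\vec z\in\mathcal{S}^{\mathrm{obs}}}\tilde w_t(\vec z)\widehat Y_t(\vec z)$ with non-random weights; unbiased means its expectation equals the estimand for every finite population satisfying the stated assumptions. *)

theory Defs
  imports Complex_Main "HOL-Library.FuncSet"
begin

text \<open>A sequence in {A,B}^T is a list of length T;
  periods are indexed 1..T, so z_[t1,t2] corresponds to drop (t1-1) (take t2 z). Potential outcomes: Y i t z (unit i, period t, sequence z).\<close>

datatype trt = A | B

definition asm1 :: "nat \<Rightarrow> nat \<Rightarrow> (nat \<Rightarrow> nat \<Rightarrow> trt list \<Rightarrow> real) \<Rightarrow> bool" where
  "asm1 N T Y \<longleftrightarrow> (\<forall>i<N. \<forall>t\<in>{1..T}. \<forall>z z'. length z = T \<longrightarrow> length z' = T \<longrightarrow>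
      take t z = take t z' \<longrightarrow> Y i t z = Y i t z')"

text \<open>Assumption 2 (carryover of order k): z_[max(1,t-k+1), t] in 1-based indexing
  is drop (t - k) (take t z) (natural-number subtraction).\<close>
definition asm2 :: "nat \<Rightarrow> nat \<Rightarrow> nat \<Rightarrow> (nat \<Rightarrow> nat \<Rightarrow> trt list \<Rightarrow> real) \<Rightarrow> bool" where
  "asm2 k N T Y \<longleftrightarrow> (\<forall>i<N. \<forall>t\<in>{1..T}. \<forall>z z'. length z = T \<longrightarrow> length z' = T \<longrightarrow>
      drop (t - k) (take t z) = drop (t - k) (take t z') \<longrightarrow> Y i t z = Y i t z')"

text \<open>Complete randomization: all assignments of the N units to observed sequences S
  with exactly Nz z units assigned to sequence z; each equally likely.\<close>
definition assignments :: "nat \<Rightarrow> trt list set \<Rightarrow> (trt list \<Rightarrow> nat) \<Rightarrow> (nat \<Rightarrow> trt list) set" where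
  "assignments N S Nz = {Z \<in> {..<N} \<rightarrow>\<^sub>E S. \<forall>z\<in>S. card {i. i < N \<and> Z i = z} = Nz z}"

definition expect :: "nat \<Rightarrow> trt list set \<Rightarrow> (trt list \<Rightarrow> nat) \<Rightarrow> ((nat \<Rightarrow> trt list) \<Rightarrow> real) \<Rightarrow> real" where
  "expect N S Nz f = (\<Sum>Z\<in>assignments N S Nz. f Z) / real (card (assignments N S Nz))"

definition Ybar :: "nat \<Rightarrow> (nat \<Rightarrow> nat \<Rightarrow> trt list \<Rightarrow> real) \<Rightarrow> nat \<Rightarrow> trt list \<Rightarrow> real" where
  "Ybar N Y t z = (\<Sum>i<N. Y i t z) / real N"

definition Yhat :: "nat \<Rightarrow> (trt list \<Rightarrow> nat) \<Rightarrow> (nat \<Rightarrow> nat \<Rightarrow> trt list \<Rightarrow> real)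
    \<Rightarrow> (nat \<Rightarrow> trt list) \<Rightarrow> nat \<Rightarrow> trt list \<Rightarrow> real" where
  "Yhat N Nz Y Z t z = (\<Sum>i\<in>{i. i < N \<and> Z i = z}. Y i t (Z i)) / real (Nz z)"

definition lin_est :: "nat \<Rightarrow> nat \<Rightarrow> trt list set \<Rightarrow> (trt list \<Rightarrow> nat) \<Rightarrow> (nat \<Rightarrow> trt list \<Rightarrow> real)
    \<Rightarrow> (nat \<Rightarrow> nat \<Rightarrow> trt list \<Rightarrow> real) \<Rightarrow> (nat \<Rightarrow> trt list) \<Rightarrow> real" where
  "lin_est N T S Nz w Y Z = (\<Sum>t\<in>{1..T}. \<Sum>z\<in>S. w t z * Yhat N Nz Y Z t z)"

definition unbiased :: "nat \<Rightarrow> nat \<Rightarrow> nat \<Rightarrow> trt list set \<Rightarrow> (trt list \<Rightarrow> nat)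
    \<Rightarrow> (nat \<Rightarrow> trt list \<Rightarrow> real) \<Rightarrow> ((nat \<Rightarrow> nat \<Rightarrow> trt list \<Rightarrow> real) \<Rightarrow> real) \<Rightarrow> bool" where
  "unbiased k N T S Nz w est \<longleftrightarrow>
     (\<forall>Y. asm1 N T Y \<and> asm2 k N T Y \<longrightarrow> expect N S Nz (lin_est N T S Nz w Y) = est Y)"

text \<open>tau_1 = Ybar_1(A) - Ybar_1(B) for T = 2; by Assumption 1 Ybar_1(z) depends only on z_1,
  so we evaluate at the full sequences AA and BB.\<close>
definition tau1 :: "nat \<Rightarrow> (nat \<Rightarrow> nat \<Rightarrow> trt list \<Rightarrow> real) \<Rightarrow> real" where
  "tau1 N Y = Ybar N Y 1 [A, A] - Ybar N Y 1 [B, B]"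

definition tau2 :: "nat \<Rightarrow> trt \<Rightarrow> (nat \<Rightarrow> nat \<Rightarrow> trt list \<Rightarrow> real) \<Rightarrow> real" where
  "tau2 N z1 Y = Ybar N Y 2 [z1, A] - Ybar N Y 2 [z1, B]"

end

theory Submission imports Defs begin

definition sw :: "nat \<Rightarrow> nat \<Rightarrow> nat \<Rightarrow> nat" where
  "sw i j x = (if x = i then j else if x = j then i else x)"

lemma sw_sw[simp]: "sw i j (sw i j x) = x" by (simp add: sw_def)
lemma sw_lt: "i<N \<Longrightarrow> j<N \<Longrightarrow> sw i j x < N \<longleftrightarrow> x < N" by (auto simp: sw_def)

lemma sw_asg:
  assumes "Z \<in> assignments N S Nz" "i<N" "j<N"
  shows "Z \<circ> sw i j \<in> assignments N S Nz"
proof -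
  have pi: "Z \<in> {..<N} \<rightarrow>\<^sub>E S" and c: "\<forall>z\<in>S. card {x. x<N \<and> Z x = z} = Nz z"
    using assms(1) by (auto simp: assignments_def)
  have "Z \<circ> sw i j \<in> {..<N} \<rightarrow>\<^sub>E S"
    using pi assms(2,3) by (auto simp: PiE_def Pi_def extensional_def sw_def)
  moreover have "card {x. x<N \<and> (Z \<circ> sw i j) x = z} = card {x. x<N \<and> Z x = z}" for z
  proof -
    have "{x. x<N \<and> (Z \<circ> sw i j) x = z} = sw i j ` {x. x<N \<and> Z x = z}"
    proof
      show "{x. x<N \<and> (Z \<circ> sw i j) x = z} \<subseteq> sw i j ` {x. x<N \<and> Z x = z}"
      proof
        fix y assume "y \<in> {x. x<N \<and> (Z \<circ> sw i j) x = z}"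
        then show "y \<in> sw i j ` {x. x<N \<and> Z x = z}"
          using assms(2,3) by (intro rev_image_eqI[of "sw i j y"]) (auto simp: sw_lt)
      qed
    qed (use assms(2,3) in \<open>auto simp: sw_lt\<close>)
    moreover have "inj_on (sw i j) A" for A by (metis sw_sw inj_onI)
    ultimately show ?thesis by (simp add: card_image)
  qed
  ultimately show ?thesis using c by (auto simp: assignments_def)
qed

lemma cnt_sym:
  assumes "i<N" "j<N"
  shows "card {Z\<in>assignments N S Nz. Z i = z} = card {Z\<in>assignments N S Nz. Z j = z}"
proof -
  have "bij_betw (\<lambda>Z. Z \<circ> sw i j) {Z\<in>assignments N S Nz. Z j = z} {Z\<in>assignments N S Nz. Z i = z}"
    by (rule bij_betw_byWitness[where f'="\<lambda>Z. Z \<circ> sw i j"])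
      (auto simp: fun_eq_iff sw_asg assms, auto simp: sw_def)
  then show ?thesis by (simp add: bij_betw_same_card)
qed

lemma fin_asg: "finite S \<Longrightarrow> finite (assignments N S Nz)"
  unfolding assignments_def by (rule finite_subset[of _ "{..<N} \<rightarrow>\<^sub>E S"]) (auto intro: finite_PiE)

lemma numer:
  assumes fin: "finite (assignments N S Nz)" and z: "z \<in> S" and N: "0 < N" and nz: "0 < Nz z"
  shows "(\<Sum>Z\<in>assignments N S Nz. Yhat N Nz Y Z t z) = real (card (assignments N S Nz)) * Ybar N Y t z"
proof -
  let ?G = "assignments N S Nz"
  define c where "c i = real (card {Z\<in>?G. Z i = z})" for i
  have yh: "Yhat N Nz Y Z t z = (\<Sum>i<N. if Z i = z then Y i t z else 0) / real (Nz z)" for Z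
  proof -
    have "{i. i < N \<and> Z i = z} = {i\<in>{..<N}. Z i = z}" by auto
    then have "(\<Sum>i\<in>{i. i < N \<and> Z i = z}. Y i t (Z i)) = (\<Sum>i\<in>{i\<in>{..<N}. Z i = z}. Y i t z)"
      by (auto intro: sum.cong)
    also have "\<dots> = (\<Sum>i<N. if Z i = z then Y i t z else 0)" by (rule sum.inter_filter) simp
    finally show ?thesis by (simp add: Yhat_def)
  qed
  have ci: "c i = c 0" if "i < N" for i
    unfolding c_def using cnt_sym[of i N 0] that N by simp
  have ind: "(\<Sum>Z\<in>?G. if Z i = z then (x::real) else 0) = x * c i" for i x
  proof -
    have "(\<Sum>Z\<in>?G. if Z i = z then (x::real) else 0) = (\<Sum>Z\<in>{Z\<in>?G. Z i = z}. x)"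
      by (rule sum.inter_filter[symmetric, OF fin])
    then show ?thesis by (simp add: c_def)
  qed
  have s1: "(\<Sum>Z\<in>?G. \<Sum>i<N. if Z i = z then Y i t z else 0) = (\<Sum>i<N. Y i t z * c i)"
    by (subst sum.swap) (simp add: ind)
  have s2: "(\<Sum>i<N. Y i t z * c i) = (\<Sum>i<N. Y i t z * c 0)"
    by (rule sum.cong[OF refl]) (metis ci lessThan_iff)
  have e1: "(\<Sum>Z\<in>?G. Yhat N Nz Y Z t z) = (\<Sum>i<N. Y i t z) * c 0 / real (Nz z)"
    by (simp add: yh sum_divide_distrib[symmetric] s1 s2 sum_distrib_right)
  have "real N * c 0 = (\<Sum>i<N. c 0)" by simp
  also have "\<dots> = (\<Sum>i<N. c i)" by (rule sum.cong[OF refl]) (metis ci lessThan_iff)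
  also have "\<dots> = (\<Sum>i<N. \<Sum>Z\<in>?G. if Z i = z then 1 else 0)" by (simp add: ind)
  also have "\<dots> = (\<Sum>Z\<in>?G. \<Sum>i<N. if Z i = z then 1 else 0)" by (rule sum.swap)
  also have "\<dots> = (\<Sum>Z\<in>?G. real (Nz z))"
  proof (rule sum.cong[OF refl])
    fix Z assume "Z \<in> ?G"
    then have cz: "card {i. i < N \<and> Z i = z} = Nz z" using z by (auto simp: assignments_def)
    have "(\<Sum>i<N. if Z i = z then 1 else 0) = (\<Sum>i\<in>{i\<in>{..<N}. Z i = z}. (1::real))"
      by (rule sum.inter_filter[symmetric]) simp
    also have "\<dots> = real (card {i\<in>{..<N}. Z i = z})" by (rule sum_constant[THEN trans]) simp
    also have "{i\<in>{..<N}. Z i = z} = {i. i < N \<and> Z i = z}" by auto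
    finally show "(\<Sum>i<N. if Z i = z then 1 else 0) = real (Nz z)" by (simp only: cz)
  qed
  finally have "real N * c 0 = real (card ?G) * real (Nz z)" by simp
  then have "c 0 = real (card ?G) * real (Nz z) / real N" using N by (simp add: field_simps)
  with e1 show ?thesis using nz N by (simp add: Ybar_def field_simps)
qed

lemma expect_lin:
  assumes S: "finite S" and ne: "assignments N S Nz \<noteq> {}" and N: "0 < N" and nz: "\<forall>z\<in>S. 0 < Nz z"
  shows "expect N S Nz (lin_est N T S Nz w Y) = (\<Sum>t\<in>{1..T}. \<Sum>z\<in>S. w t z * Ybar N Y t z)"
proof -
  let ?G = "assignments N S Nz"
  have fin: "finite ?G" using fin_asg[OF S] .
  have cpos: "real (card ?G) > 0" using fin ne by (simp add: card_gt_0_iff)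
  have "(\<Sum>Z\<in>?G. lin_est N T S Nz w Y Z) = (\<Sum>t\<in>{1..T}. \<Sum>z\<in>S. \<Sum>Z\<in>?G. w t z * Yhat N Nz Y Z t z)"
    unfolding lin_est_def by (subst sum.swap) (simp add: sum.swap[of _ ?G S])
  also have "\<dots> = (\<Sum>t\<in>{1..T}. \<Sum>z\<in>S. w t z * (real (card ?G) * Ybar N Y t z))"
    by (rule sum.cong[OF refl], rule sum.cong[OF refl])
      (simp add: sum_distrib_left[symmetric] numer[OF fin _ N] nz)
  also have "\<dots> = real (card ?G) * (\<Sum>t\<in>{1..T}. \<Sum>z\<in>S. w t z * Ybar N Y t z)"
    by (simp add: sum_distrib_left mult_ac)
  finally show ?thesis using cpos unfolding expect_def by simp
qed

lemma len2: "length z = 2 \<Longrightarrow> z = [z!0, z!1]"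
  by (cases z; cases "tl z") auto

definition Yc :: "real \<Rightarrow> real \<Rightarrow> real \<Rightarrow> real \<Rightarrow> nat \<Rightarrow> nat \<Rightarrow> trt list \<Rightarrow> real" where
  "Yc a1 b1 a2 b2 i t z = (if t = 1 then (if z!0 = A then a1 else b1) else (if z!1 = A then a2 else b2))"

lemma Yc_asm1: "asm1 N 2 (Yc a1 b1 a2 b2)"
  unfolding asm1_def
proof (intro allI impI ballI)
  fix i t and z z' :: "trt list" assume t: "t \<in> {1..2::nat}" and l: "length z = 2" "length z' = 2" and tk: "take t z = take t z'"
  from t have "t = 1 \<or> t = 2" by auto
  then show "Yc a1 b1 a2 b2 i t z = Yc a1 b1 a2 b2 i t z'"
  proof -
    obtain a b where z: "z = [a,b]" using len2[OF l(1)] by blast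
    obtain c d where z': "z' = [c,d]" using len2[OF l(2)] by blast
    show ?thesis using tk \<open>t = 1 \<or> t = 2\<close> by (auto simp: Yc_def z z')
  qed
qed

lemma Yc_asm2: "asm2 1 N 2 (Yc a1 b1 a2 b2)"
  unfolding asm2_def
proof (intro allI impI ballI)
  fix i t and z z' :: "trt list" assume t: "t \<in> {1..2::nat}" and l: "length z = 2" "length z' = 2"
    and tk: "drop (t - 1) (take t z) = drop (t - 1) (take t z')"
  obtain a b where z: "z = [a,b]" using len2[OF l(1)] by blast
  obtain c d where z': "z' = [c,d]" using len2[OF l(2)] by blast
  from t have "t = 1 \<or> t = 2" by auto
  then show "Yc a1 b1 a2 b2 i t z = Yc a1 b1 a2 b2 i t z'"
    using tk by (auto simp: Yc_def z z')
qed

lemma Yc_bar: "0 < N \<Longrightarrow> Ybar N (Yc a1 b1 a2 b2) t z = Yc a1 b1 a2 b2 0 t z"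
  unfolding Ybar_def by (simp add: Yc_def)

lemma asm2D: "asm2 k N T Y \<Longrightarrow> i<N \<Longrightarrow> t\<in>{1..T} \<Longrightarrow> length z = T \<Longrightarrow> length z' = T
  \<Longrightarrow> drop (t - k) (take t z) = drop (t - k) (take t z') \<Longrightarrow> Y i t z = Y i t z'"
  unfolding asm2_def by blast

theorem proposition5:
  fixes Nz :: "trt list \<Rightarrow> nat" and N :: nat and w :: "nat \<Rightarrow> trt list \<Rightarrow> real"
  assumes "Nz [A, B] \<ge> 1" and "Nz [B, A] \<ge> 1" and "N = Nz [A, B] + Nz [B, A]"
  shows "(unbiased 1 N 2 {[A, B], [B, A]} Nz w (tau1 N) \<longleftrightarrow>
            w 1 [A, B] = 1 \<and> w 1 [B, A] = -1 \<and> w 2 [A, B] = 0 \<and> w 2 [B, A] = 0)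
       \<and> (unbiased 1 N 2 {[A, B], [B, A]} Nz w (tau2 N A) \<longleftrightarrow>
            w 1 [A, B] = 0 \<and> w 1 [B, A] = 0 \<and> w 2 [A, B] = -1 \<and> w 2 [B, A] = 1)"
proof -
  let ?S = "{[A, B], [B, A]}"
  have N: "0 < N" using assms by simp
  have nz: "\<forall>z\<in>?S. 0 < Nz z" using assms by auto
  define Z0 where "Z0 i = (if i < Nz [A,B] then [A,B] else if i < N then [B,A] else undefined)" for i
  have "Z0 \<in> assignments N ?S Nz"
  proof -
    have "Z0 \<in> {..<N} \<rightarrow>\<^sub>E ?S" using assms by (auto simp: Z0_def PiE_def Pi_def extensional_def)
    moreover have "{i. i < N \<and> Z0 i = [A,B]} = {..<Nz [A,B]}" using assms by (auto simp: Z0_def)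
    moreover have "{i. i < N \<and> Z0 i = [B,A]} = {Nz [A,B]..<N}" using assms by (auto simp: Z0_def)
    ultimately show ?thesis using assms by (simp add: assignments_def)
  qed
  then have ne: "assignments N ?S Nz \<noteq> {}" by blast
  have T2: "{1..2::nat} = {1,2}" by auto
  have fS: "finite ?S" by simp
  have E: "expect N ?S Nz (lin_est N 2 ?S Nz w Y) = w 1 [A,B] * Ybar N Y 1 [A,B] + w 1 [B,A] * Ybar N Y 1 [B,A]
       + w 2 [A,B] * Ybar N Y 2 [A,B] + w 2 [B,A] * Ybar N Y 2 [B,A]" for Y
    unfolding expect_lin[OF fS ne N nz] T2 by simp
  have a2: "Ybar N Y 1 [A,B] = Ybar N Y 1 [A,A] \<and> Ybar N Y 1 [B,A] = Ybar N Y 1 [B,B]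
      \<and> Ybar N Y 2 [B,A] = Ybar N Y 2 [A,A]" if h: "asm2 1 N 2 Y" for Y
  proof -
    have "Y i 1 [A,B] = Y i 1 [A,A]" "Y i 1 [B,A] = Y i 1 [B,B]" "Y i 2 [B,A] = Y i 2 [A,A]" if "i < N" for i
      by (rule asm2D[OF h that]; simp)+
    then show ?thesis unfolding Ybar_def by (metis (no_types, lifting) lessThan_iff sum.cong)
  qed
  have Yb: "Ybar N (Yc a1 b1 a2 b2) t z = Yc a1 b1 a2 b2 0 t z" for a1 b1 a2 b2 t z
    using Yc_bar[OF N] .
  have yca: "asm1 N 2 (Yc a1 b1 a2 b2) \<and> asm2 1 N 2 (Yc a1 b1 a2 b2)" for a1 b1 a2 b2
    using Yc_asm1 Yc_asm2 by blast
  have part1: "unbiased 1 N 2 ?S Nz w (tau1 N) \<longleftrightarrow>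
            w 1 [A, B] = 1 \<and> w 1 [B, A] = -1 \<and> w 2 [A, B] = 0 \<and> w 2 [B, A] = 0"
  proof
    assume u: "unbiased 1 N 2 ?S Nz w (tau1 N)"
    have eq: "w 1 [A,B] * a1 + w 1 [B,A] * b1 + w 2 [A,B] * b2 + w 2 [B,A] * a2 = a1 - b1" for a1 b1 a2 b2
      using u yca[of a1 b1 a2 b2] unfolding unbiased_def
      by (auto simp: E Yb tau1_def Yc_def)
    show "w 1 [A, B] = 1 \<and> w 1 [B, A] = -1 \<and> w 2 [A, B] = 0 \<and> w 2 [B, A] = 0"
      using eq[of 1 0 0 0] eq[of 0 1 0 0] eq[of 0 0 1 0] eq[of 0 0 0 1] by simp
  next
    assume "w 1 [A, B] = 1 \<and> w 1 [B, A] = -1 \<and> w 2 [A, B] = 0 \<and> w 2 [B, A] = 0"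
    then show "unbiased 1 N 2 ?S Nz w (tau1 N)"
      unfolding unbiased_def using a2 by (simp add: E tau1_def)
  qed
  have part2: "unbiased 1 N 2 ?S Nz w (tau2 N A) \<longleftrightarrow>
            w 1 [A, B] = 0 \<and> w 1 [B, A] = 0 \<and> w 2 [A, B] = -1 \<and> w 2 [B, A] = 1"
  proof
    assume u: "unbiased 1 N 2 ?S Nz w (tau2 N A)"
    have eq: "w 1 [A,B] * a1 + w 1 [B,A] * b1 + w 2 [A,B] * b2 + w 2 [B,A] * a2 = a2 - b2" for a1 b1 a2 b2
      using u yca[of a1 b1 a2 b2] unfolding unbiased_def
      by (auto simp: E Yb tau2_def Yc_def)
    show "w 1 [A, B] = 0 \<and> w 1 [B, A] = 0 \<and> w 2 [A, B] = -1 \<and> w 2 [B, A] = 1"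
      using eq[of 1 0 0 0] eq[of 0 1 0 0] eq[of 0 0 1 0] eq[of 0 0 0 1] by simp
  next
    assume "w 1 [A, B] = 0 \<and> w 1 [B, A] = 0 \<and> w 2 [A, B] = -1 \<and> w 2 [B, A] = 1"
    then show "unbiased 1 N 2 ?S Nz w (tau2 N A)"
      unfolding unbiased_def using a2 by (simp add: E tau2_def)
  qed
  show ?thesis using part1 part2 by blast
qed

end
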